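(* Let $P(x)=\sum_{i=0}^n p_i x^i\in\mathbb{R}[x]$ be a polynomial of degree $n\ge 2$ that is not identically zero. For a point $m\in\mathbb{R}$, a real $\epsilon>0$ and a positive integer $N$, write $m[\epsilon;N]:=\{m+i\epsilon : i=-\lceil N/2\rceil,\dots,\lceil N/2\rceil\}$. Let $\mathbf{m}:=m[\epsilon;n]$ and $\mathbf{M}:=m[\epsilon/2^{\lambda};2^{\lambda}n]$, where $\lambda\ge 2$ is an integer with $\lambda=O(\log n)$. Consider the following randomized procedure: for $\rho=63,127,255,\dots$ (i.e. $\rho_{j+1}=2\rho_j+1$), pick a point $m_j\in\mathbf{M}$ uniformly at random (independently in each iteration), compute (by interval arithmetic) an approximation $\tilde v_j$ of $v_j=P(m_j)$ with $|\tilde v_j-v_j|<2^{-\rho}$, and if $|\tilde v_j|>2^{-\rho+2}$, return $m':=m_j$ (otherwise continue with the next $\rho$). Then, for every integer $k\ge 1$, with probability at least $1-2^{-k(\lambda-1)}$ the procedure returns a point $m'\in\mathbf{M}$ with $P(m')\neq 0$ and $$\log\max\bigl(1,|P(m')|^{-1}\bigr)=2^k\cdot O\Bigl(n\log n+\log\max\bigl(1,(\max_{m_i\in\mathbf{m}}|P(m_i)|)^{-1}\bigr)\Bigr),$$ where the implied constant depends only on the implied constant in $\lambda=O(\log n)$ (logarithms are to base 2).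
   Context: The returned point is called a pseudo-admissible point. The point of the statement is a bound on $-\log|P(m')|$ (equivalently on the working precision $\rho$ at termination) that holds with high probability over the random choices of the procedure. *)

theory Defs
  imports "HOL-Probability.Probability" "HOL-Computational_Algebra.Polynomial"
begin

definition grid :: "real \<Rightarrow> real \<Rightarrow> nat \<Rightarrow> real set" where
  "grid m eps N = {m + of_int i * eps | i::int.
      - \<lceil>real N / 2\<rceil> \<le> i \<and> i \<le> \<lceil>real N / 2\<rceil>}"

text \<open>Working precision in iteration j (j = 0,1,2,...): 63, 127, 255, ...,
  i.e. rho 0 = 63 and rho (j+1) = 2 * rho j + 1.\<close>
definition rho :: "nat \<Rightarrow> nat" where
  "rho j = 2 ^ (j + 6) - 1"

text \<open>Acceptance test of iteration j at sampled point x, using the approximation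
  oracle approx (approx r x approximates P(x) to absolute error < 2^-r).\<close>
definition accept :: "(nat \<Rightarrow> real \<Rightarrow> real) \<Rightarrow> nat \<Rightarrow> real \<Rightarrow> bool" where
  "accept approx j x \<longleftrightarrow> \<bar>approx (rho j) x\<bar> > 2 powr (- real (rho j) + 2)"

text \<open>Given the sequence of random samples omega (omega !! j is the point picked in
  iteration j), the procedure returns in iteration j (and hence returns omega !! j).\<close>
definition returns_at :: "(nat \<Rightarrow> real \<Rightarrow> real) \<Rightarrow> real stream \<Rightarrow> nat \<Rightarrow> bool" where
  "returns_at approx \<omega> j \<longleftrightarrow>
     (\<forall>i<j. \<not> accept approx i (\<omega> !! i)) \<and> accept approx j (\<omega> !! j)"

end

theory Submission
  imports Defs
begin

lemma pred_snth:
  fixes p :: "'a pmf"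
  shows "Measurable.pred (stream_space (measure_pmf p)) (\<lambda>\<omega>. Q (\<omega> !! i))"
  by (rule measurable_compose[OF measurable_snth]) simp

lemma sets_snth_all:
  fixes p :: "'a pmf"
  shows "{\<omega>. \<forall>i<k. \<omega> !! (b + i) \<in> A} \<in> sets (stream_space (measure_pmf p))"
proof -
  have "{\<omega>\<in>space (stream_space (measure_pmf p)). \<forall>i\<in>{..<k}. \<omega> !! (b + i) \<in> A} \<in> sets (stream_space (measure_pmf p))"
  proof (rule sets.sets_Collect_finite_All)
    fix i show "{\<omega>\<in>space (stream_space (measure_pmf p)). \<omega> !! (b + i) \<in> A} \<in> sets (stream_space (measure_pmf p))"
      using pred_snth[where p=p and Q="\<lambda>x. x \<in> A" and i="b+i"] unfolding pred_def .
  qed simp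
  then show ?thesis by (simp add: space_stream_space lessThan_iff Ball_def)
qed

lemma shift_set:
  fixes p :: "'a pmf"
  shows "emeasure (stream_space (measure_pmf p)) {\<omega>. \<forall>i<k. \<omega> !! (Suc a + i) \<in> A} = emeasure (stream_space (measure_pmf p)) {\<omega>. \<forall>i<k. \<omega> !! (a + i) \<in> A}"
proof -
  note P = prob_space_measure_pmf[of p]
  have "emeasure (stream_space (measure_pmf p)) {\<omega>. \<forall>i<k. \<omega> !! (Suc a + i) \<in> A} =
     (\<integral>\<^sup>+t. emeasure (stream_space (measure_pmf p)) {x\<in>space (stream_space (measure_pmf p)). t ## x \<in> {\<omega>. \<forall>i<k. \<omega> !! (Suc a + i) \<in> A}} \<partial>measure_pmf p)"
    by (rule prob_space.emeasure_stream_space[OF P sets_snth_all])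
  also have "\<dots> = (\<integral>\<^sup>+t. emeasure (stream_space (measure_pmf p)) {\<omega>. \<forall>i<k. \<omega> !! (a + i) \<in> A} \<partial>measure_pmf p)"
    by (simp add: space_stream_space)
  also have "\<dots> = emeasure (stream_space (measure_pmf p)) {\<omega>. \<forall>i<k. \<omega> !! (a + i) \<in> A}"
    by (simp add: prob_space.emeasure_space_1[OF P])
  finally show ?thesis .
qed

lemma shift_set0:
  fixes p :: "'a pmf"
  shows "emeasure (stream_space (measure_pmf p)) {\<omega>. \<forall>i<k. \<omega> !! (a + i) \<in> A} = emeasure (stream_space (measure_pmf p)) {\<omega>. \<forall>i<k. \<omega> !! i \<in> A}"
proof (induction a)
  case (Suc a) show ?case by (rule trans[OF shift_set Suc])
qed simp

lemma prod_set:
  fixes p :: "'a pmf"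
  shows "emeasure (stream_space (measure_pmf p)) {\<omega>. \<forall>i<k. \<omega> !! (a + i) \<in> A} = emeasure (measure_pmf p) A ^ k"
proof -
  note P = prob_space_measure_pmf[of p]
  have "emeasure (stream_space (measure_pmf p)) {\<omega>. \<forall>i<k. \<omega> !! i \<in> A} = emeasure (measure_pmf p) A ^ k"
  proof (induction k)
    case 0
    then show ?case using prob_space.emeasure_space_1[OF prob_space.prob_space_stream_space[OF P]]
      by (simp add: space_stream_space)
  next
    case (Suc k)
    have "emeasure (stream_space (measure_pmf p)) {\<omega>. \<forall>i<Suc k. \<omega> !! i \<in> A} =
     (\<integral>\<^sup>+t. emeasure (stream_space (measure_pmf p)) {x\<in>space (stream_space (measure_pmf p)). t ## x \<in> {\<omega>. \<forall>i<Suc k. \<omega> !! i \<in> A}} \<partial>measure_pmf p)"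
      by (rule prob_space.emeasure_stream_space[OF P sets_snth_all[where b=0, simplified]])
    also have "\<dots> = (\<integral>\<^sup>+t. indicator A t * emeasure (stream_space (measure_pmf p)) {\<omega>. \<forall>i<k. \<omega> !! i \<in> A} \<partial>measure_pmf p)"
    proof (rule nn_integral_cong)
      fix t
      have "{x\<in>space (stream_space (measure_pmf p)). t ## x \<in> {\<omega>. \<forall>i<Suc k. \<omega> !! i \<in> A}} =
         (if t \<in> A then {\<omega>. \<forall>i<k. \<omega> !! i \<in> A} else {})"
        by (auto simp: space_stream_space less_Suc_eq_0_disj)
      then show "emeasure (stream_space (measure_pmf p)) {x\<in>space (stream_space (measure_pmf p)). t ## x \<in> {\<omega>. \<forall>i<Suc k. \<omega> !! i \<in> A}} = indicator A t * emeasure (stream_space (measure_pmf p)) {\<omega>. \<forall>i<k. \<omega> !! i \<in> A}"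
        by (simp split: split_indicator)
    qed
    also have "\<dots> = emeasure (measure_pmf p) A * emeasure (stream_space (measure_pmf p)) {\<omega>. \<forall>i<k. \<omega> !! i \<in> A}"
      by (simp add: nn_integral_multc)
    finally show ?case using Suc by (simp add: mult.commute)
  qed
  then show ?thesis by (simp add: shift_set0)
qed

lemma grid_eq: "grid m d N = (\<lambda>i. m + of_int i * d) ` {-\<lceil>real N / 2\<rceil>..\<lceil>real N / 2\<rceil>}"
  unfolding grid_def by auto

lemma grid_finite: "finite (grid m d N)"
  unfolding grid_eq by simp

lemma grid_ne: "m \<in> grid m d N"
  unfolding grid_def by (rule CollectI, rule exI[of _ 0]) auto

lemma grid_card: assumes "d > 0" shows "card (grid m d N) \<ge> N + 1"
proof -
  have inj: "inj_on (\<lambda>i. m + of_int i * d) {-\<lceil>real N / 2\<rceil>..\<lceil>real N / 2\<rceil>}"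
    using assms by (auto simp: inj_on_def)
  have "card (grid m d N) = nat (2 * \<lceil>real N / 2\<rceil> + 1)"
    unfolding grid_eq using card_image[OF inj] by simp
  moreover have "real N / 2 \<le> of_int \<lceil>real N / 2\<rceil>" by (rule le_of_int_ceiling)
  ultimately show ?thesis by linarith
qed

lemma grid_dist_m: assumes "d > 0" "x \<in> grid m d N" shows "\<bar>x - m\<bar> \<le> (real N + 1) / 2 * d"
proof -
  obtain i :: int where i: "x = m + of_int i * d" "- \<lceil>real N / 2\<rceil> \<le> i" "i \<le> \<lceil>real N / 2\<rceil>"
    using assms(2) unfolding grid_def by auto
  have c: "of_int \<lceil>real N / 2\<rceil> \<le> (real N + 1) / 2"
  proof -
    have "of_int \<lceil>real N / 2\<rceil> - 1 < real N / 2" using ceiling_correct[of "real N / 2"] by simp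
    then have "2 * \<lceil>real N / 2\<rceil> < int N + 2" by linarith
    then have "2 * \<lceil>real N / 2\<rceil> \<le> int N + 1" by linarith
    then have "real_of_int (2 * \<lceil>real N / 2\<rceil>) \<le> real_of_int (int N + 1)" by (rule of_int_le_iff[THEN iffD2])
    then show ?thesis by simp
  qed
  have "\<bar>of_int i\<bar> \<le> (real N + 1) / 2" using i c by linarith
  then have "\<bar>of_int i\<bar> * d \<le> (real N + 1) / 2 * d" using assms(1) by (intro mult_right_mono) auto
  then show ?thesis using i assms(1) by (simp add: abs_mult)
qed

lemma grid_sep: assumes "d > 0" "x \<in> grid m d N" "z \<in> grid m d N" "x \<noteq> z" shows "\<bar>x - z\<bar> \<ge> d"
proof -
  obtain i :: int where i: "x = m + of_int i * d"
    using assms(2) unfolding grid_def by auto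
  obtain j :: int where j: "z = m + of_int j * d"
    using assms(3) unfolding grid_def by auto
  have "i \<noteq> j" using assms(4) i j by auto
  then have "\<bar>of_int (i - j)\<bar> \<ge> (1::real)" by linarith
  then have "\<bar>of_int (i - j)\<bar> * d \<ge> 1 * d" using assms(1) by (intro mult_right_mono) auto
  moreover have "x - z = of_int (i - j) * d" by (simp add: i j algebra_simps)
  ultimately show ?thesis using assms(1) by (simp add: abs_mult)
qed

lemma lagrange_eval:
  fixes P :: "real poly" and B :: "real set"
  assumes fin: "finite B" and cardB: "card B = Suc d" and deg: "degree P \<le> d"
  shows "poly P y = (\<Sum>x\<in>B. poly P x * (\<Prod>z\<in>B-{x}. (y - z) / (x - z)))"
proof -
  define L where "L = (\<Sum>x\<in>B. smult (poly P x / (\<Prod>z\<in>B-{x}. (x - z))) (\<Prod>z\<in>B-{x}. [:-z, 1:]))"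
  have polyL: "poly L y = (\<Sum>x\<in>B. poly P x * (\<Prod>z\<in>B-{x}. (y - z) / (x - z)))" for y
  proof -
    have "poly L y = (\<Sum>x\<in>B. poly P x / (\<Prod>z\<in>B-{x}. (x - z)) * (\<Prod>z\<in>B-{x}. poly [:-z, 1:] y))"
      by (simp only: L_def poly_sum poly_smult poly_prod)
    also have "\<dots> = (\<Sum>x\<in>B. poly P x * (\<Prod>z\<in>B-{x}. (y - z) / (x - z)))"
    proof (intro sum.cong refl)
      fix x
      have "(\<Prod>z\<in>B-{x}. poly [:-z, 1:] y) = (\<Prod>z\<in>B-{x}. (y - z))" by (intro prod.cong) auto
      then show "poly P x / (\<Prod>z\<in>B-{x}. (x - z)) * (\<Prod>z\<in>B-{x}. poly [:-z, 1:] y) = poly P x * (\<Prod>z\<in>B-{x}. (y - z) / (x - z))"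
        by (simp only: prod_dividef) simp
    qed
    finally show ?thesis .
  qed
  have degL: "degree L \<le> d"
    unfolding L_def
  proof (rule degree_sum_le)
    fix x assume "x \<in> B"
    have "degree (\<Prod>z\<in>B-{x}. [:-z, 1:]) \<le> (\<Sum>z\<in>B-{x}. degree [:-z, 1::real:])"
      using fin by (intro order.trans[OF degree_prod_sum_le]) auto
    also have "\<dots> = card (B - {x})" by simp
    also have "\<dots> = d" using \<open>x \<in> B\<close> cardB fin by simp
    finally show "degree (smult (poly P x / (\<Prod>z\<in>B-{x}. (x - z))) (\<Prod>z\<in>B-{x}. [:-z, 1:])) \<le> d"
      by (rule order.trans[OF degree_smult_le])
  qed (rule fin)
  have agree: "poly P x = poly L x" if "x \<in> B" for x
  proof -
    have "poly L x = (\<Sum>x'\<in>B. poly P x' * (\<Prod>z\<in>B-{x'}. (x - z) / (x' - z)))" by (rule polyL)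
    also have "\<dots> = poly P x * (\<Prod>z\<in>B-{x}. (x - z) / (x - z))"
    proof (rule sum.remove[OF fin that, THEN trans])
      have "(\<Sum>x'\<in>B-{x}. poly P x' * (\<Prod>z\<in>B-{x'}. (x - z) / (x' - z))) = 0"
      proof (rule sum.neutral, rule ballI)
        fix x' assume "x' \<in> B - {x}"
        then have "(\<Prod>z\<in>B-{x'}. (x - z) / (x' - z)) = 0"
          using fin that by (intro prod_zero) auto
        then show "poly P x' * (\<Prod>z\<in>B-{x'}. (x - z) / (x' - z)) = 0" by simp
      qed
      then show "poly P x * (\<Prod>z\<in>B-{x}. (x - z) / (x - z)) + (\<Sum>x'\<in>B-{x}. poly P x' * (\<Prod>z\<in>B-{x'}. (x - z) / (x' - z))) = poly P x * (\<Prod>z\<in>B-{x}. (x - z) / (x - z))"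
        by simp
    qed
    also have "(\<Prod>z\<in>B-{x}. (x - z) / (x - z)) = 1"
      by (rule prod.neutral) auto
    finally show ?thesis by simp
  qed
  have "P = L"
  proof (rule poly_eqI_degree[where A=B])
    show "\<And>x. x \<in> B \<Longrightarrow> poly P x = poly L x" by (rule agree)
    show "card B > degree P" using deg cardB by linarith
    show "card B > degree L" using degL cardB by linarith
  qed
  then have "poly P y = poly L y" by simp
  also have "\<dots> = (\<Sum>x\<in>B. poly P x * (\<Prod>z\<in>B-{x}. (y - z) / (x - z)))" by (rule polyL)
  finally show ?thesis .
qed

lemma max_pos:
  fixes P :: "real poly"
  assumes "degree P = n" "n \<ge> 1" "eps > 0"
  shows "Max ((\<lambda>y. \<bar>poly P y\<bar>) ` grid m eps n) > 0"
proof -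
  have P0: "P \<noteq> 0" using assms by auto
  have "\<exists>y\<in>grid m eps n. poly P y \<noteq> 0"
  proof (rule ccontr)
    assume "\<not> ?thesis"
    then have "grid m eps n \<subseteq> {x. poly P x = 0}" by auto
    then have "card (grid m eps n) \<le> card {x. poly P x = 0}"
      by (intro card_mono poly_roots_finite P0)
    also have "\<dots> \<le> n" using card_poly_roots_bound[OF P0] assms by simp
    finally show False using grid_card[OF assms(3), where m=m and N=n] by simp
  qed
  then obtain y where y: "y \<in> grid m eps n" "poly P y \<noteq> 0" by auto
  have "\<bar>poly P y\<bar> \<le> Max ((\<lambda>y. \<bar>poly P y\<bar>) ` grid m eps n)"
    using y grid_finite by (intro Max_ge) auto
  then show ?thesis using y by linarith
qed

lemma few_bad:
  fixes P :: "real poly" and m eps :: real and lam :: nat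
  assumes deg: "degree P = n" and n1: "n \<ge> 1" and eps: "eps > 0"
  defines "Mx \<equiv> Max ((\<lambda>y. \<bar>poly P y\<bar>) ` grid m eps n)"
  defines "T \<equiv> Mx / (2 * (real (n+1) * (real (n+1) * 2 ^ lam) ^ n))"
  shows "card {x \<in> grid m (eps / 2 ^ lam) (2 ^ lam * n). \<bar>poly P x\<bar> \<le> T} \<le> n"
proof (rule ccontr)
  define G where "G = grid m (eps / 2 ^ lam) (2 ^ lam * n)"
  define R :: real where "R = real (n+1) * 2 ^ lam"
  have R0: "R > 0" unfolding R_def by simp
  have Mx0: "Mx > 0" unfolding Mx_def using max_pos[OF deg n1 eps] .
  have del0: "eps / 2 ^ lam > 0" using eps by simp
  assume "\<not> card {x \<in> G. \<bar>poly P x\<bar> \<le> T} \<le> n"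
  then have "Suc n \<le> card {x \<in> G. \<bar>poly P x\<bar> \<le> T}" unfolding G_def by simp
  then obtain B where B: "B \<subseteq> {x \<in> G. \<bar>poly P x\<bar> \<le> T}" "card B = Suc n" and finB: "finite B"
    by (rule obtain_subset_with_card_n)
  have bound: "\<bar>poly P y\<bar> \<le> Mx / 2" if y: "y \<in> grid m eps n" for y
  proof -
    have fac: "\<bar>(y - z) / (x - z)\<bar> \<le> R" if "x \<in> B" "z \<in> B - {x}" for x z
    proof -
      have xG: "x \<in> G" and zG: "z \<in> G" using that B(1) by auto
      have "\<bar>x - z\<bar> \<ge> eps / 2 ^ lam"
        using grid_sep[OF del0] xG zG that(2) unfolding G_def by auto
      moreover have "\<bar>y - z\<bar> \<le> (real n + 1) * eps"
      proof -
        have "\<bar>y - m\<bar> \<le> (real n + 1) / 2 * eps" by (rule grid_dist_m[OF eps y])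
        moreover have "\<bar>z - m\<bar> \<le> (real (2 ^ lam * n) + 1) / 2 * (eps / 2 ^ lam)"
          using grid_dist_m[OF del0] zG unfolding G_def by blast
        moreover have "(real (2 ^ lam * n) + 1) / 2 * (eps / 2 ^ lam) \<le> (real n + 1) / 2 * eps"
        proof -
          have "(real (2 ^ lam * n) + 1) / 2 * (eps / 2 ^ lam) = (real n + 1 / 2 ^ lam) / 2 * eps"
            by (simp add: field_simps)
          also have "\<dots> \<le> (real n + 1) / 2 * eps"
            using eps by (intro mult_right_mono divide_right_mono) (auto simp: field_simps)
          finally show ?thesis .
        qed
        ultimately show ?thesis by linarith
      qed
      ultimately have "\<bar>y - z\<bar> / \<bar>x - z\<bar> \<le> (real n + 1) * eps / (eps / 2 ^ lam)"
        using del0 by (intro frac_le) auto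
      also have "\<dots> = R" unfolding R_def using eps by (simp add: field_simps)
      finally show ?thesis by (simp add: abs_divide)
    qed
    have "poly P y = (\<Sum>x\<in>B. poly P x * (\<Prod>z\<in>B-{x}. (y - z) / (x - z)))"
      using lagrange_eval[OF finB B(2)] deg by simp
    then have "\<bar>poly P y\<bar> \<le> (\<Sum>x\<in>B. \<bar>poly P x * (\<Prod>z\<in>B-{x}. (y - z) / (x - z))\<bar>)"
      by (simp only: sum_abs)
    also have "\<dots> = (\<Sum>x\<in>B. \<bar>poly P x\<bar> * (\<Prod>z\<in>B-{x}. \<bar>(y - z) / (x - z)\<bar>))"
      by (simp only: abs_mult abs_prod)
    also have "\<dots> \<le> (\<Sum>x\<in>B. T * R ^ n)"
    proof (rule sum_mono)
      fix x assume xB: "x \<in> B"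
      have "\<bar>poly P x\<bar> \<le> T" using xB B(1) by auto
      moreover have "(\<Prod>z\<in>B-{x}. \<bar>(y - z) / (x - z)\<bar>) \<le> (\<Prod>z\<in>B-{x}. R)"
        using fac[OF xB] by (intro prod_mono) auto
      moreover have "(\<Prod>z\<in>B-{x}. R) = R ^ n" using xB B(2) finB by simp
      ultimately show "\<bar>poly P x\<bar> * (\<Prod>z\<in>B-{x}. \<bar>(y - z) / (x - z)\<bar>) \<le> T * R ^ n"
        by (intro mult_mono) (auto intro: prod_nonneg)
    qed
    also have "\<dots> = real (n+1) * (T * R ^ n)"
      using B(2) by simp
    also have "\<dots> = Mx / 2"
    proof -
      have "T = Mx / (2 * (real (n+1) * R ^ n))" unfolding T_def R_def by simp
      moreover have "real (n+1) * R ^ n > 0" using R0 by simp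
      ultimately show ?thesis by (simp add: field_simps)
    qed
    finally show ?thesis .
  qed
  have "Mx \<in> (\<lambda>y. \<bar>poly P y\<bar>) ` grid m eps n"
    unfolding Mx_def using grid_finite[of m eps n] grid_ne[of m eps n] by (intro Max_in) auto
  then obtain y where "y \<in> grid m eps n" "Mx = \<bar>poly P y\<bar>" by auto
  then have "Mx \<le> Mx / 2" using bound by simp
  then show False using Mx0 by simp
qed

lemma log_bound:
  fixes n lam :: nat and c Mx T :: real
  assumes n2: "n \<ge> 2" and lam: "real lam \<le> c * log 2 (real n)" and Mx: "Mx > 0"
    and T: "T = Mx / (2 * (real (n+1) * (real (n+1) * 2 ^ lam) ^ n))"
  shows "log 2 (5 / T) \<le> (6 + \<bar>c\<bar>) * (real n * log 2 (real n) + log 2 (max 1 (1 / Mx)))"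
proof -
  define l where "l = log 2 (real n)"
  define L where "L = log 2 (max 1 (1 / Mx))"
  have l1: "l \<ge> 1" unfolding l_def using n2 by simp
  have L0: "L \<ge> 0" unfolding L_def by simp
  have LM: "- log 2 Mx \<le> L"
  proof -
    have "- log 2 Mx = log 2 (1 / Mx)" using Mx by (simp add: log_divide)
    also have "\<dots> \<le> L" unfolding L_def using Mx by (intro log_le_cancel_iff[THEN iffD2]) auto
    finally show ?thesis .
  qed
  have ln1: "log 2 (real n + 1) \<le> 2 * l"
  proof -
    have "log 2 (real n + 1) \<le> log 2 (2 * real n)" using n2 by (intro log_le_cancel_iff[THEN iffD2]) auto
    also have "\<dots> = 1 + l" unfolding l_def using n2 by (simp add: log_mult)
    finally show ?thesis using l1 by linarith
  qed
  have l10: "log 2 10 \<le> (4::real)"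
  proof -
    have "log 2 10 \<le> log 2 (16::real)" by (intro log_le_cancel_iff[THEN iffD2]) auto
    moreover have "log 2 (16::real) = 4" using log_nat_power[of "2::real" 2 4] by simp
    ultimately show ?thesis by simp
  qed
  have eq: "5 / T = 10 * (real n + 1) * ((real n + 1) * 2 ^ lam) ^ n / Mx"
    using T Mx by (simp add: field_simps)
  have "log 2 (5 / T) = log 2 10 + log 2 (real n + 1) + real n * (log 2 (real n + 1) + real lam) - log 2 Mx"
  proof -
    have h: "log 2 (10 * real n + 10) = log 2 10 + log 2 (real n + 1)"
      using log_mult[of 2 10 "real n+1"] by (simp add: algebra_simps)
    show ?thesis unfolding eq using Mx by (simp add: log_divide log_mult log_nat_power h)
  qed
  also have "\<dots> \<le> 4 + 2 * l + real n * (2 * l + \<bar>c\<bar> * l) + L"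
  proof -
    have "real lam \<le> \<bar>c\<bar> * l" using lam l1 unfolding l_def
      by (metis abs_ge_self dual_order.trans mult_right_mono order_less_imp_le order_less_le_trans zero_less_one)
    then have "real n * (log 2 (real n + 1) + real lam) \<le> real n * (2 * l + \<bar>c\<bar> * l)"
      using ln1 by (intro mult_left_mono) auto
    then show ?thesis using l10 ln1 LM by linarith
  qed
  also have "\<dots> \<le> (6 + \<bar>c\<bar>) * (real n * l) + L"
  proof -
    have "2 * l \<le> real n * l" using n2 l1 by (intro mult_right_mono) auto
    moreover have "4 \<le> 2 * (real n * l)"
    proof -
      have "2 * 1 \<le> real n * l" using n2 l1 by (intro mult_mono) auto
      then show ?thesis by linarith
    qed
    ultimately show ?thesis by (simp add: algebra_simps)
  qed
  also have "\<dots> \<le> (6 + \<bar>c\<bar>) * (real n * l + L)"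
  proof -
    have "L \<le> (6 + \<bar>c\<bar>) * L" using L0 by (simp add: algebra_simps)
    then show ?thesis by (simp add: algebra_simps)
  qed
  finally show ?thesis unfolding l_def L_def .
qed

lemma pow2_between:
  fixes x :: real assumes "x \<ge> 1" shows "\<exists>j::nat. x \<le> 2 ^ j \<and> 2 ^ j \<le> 2 * x"
proof -
  obtain j0 :: nat where "x < 2 ^ j0" using real_arch_pow[of 2 x] by auto
  then have ex: "\<exists>j::nat. x \<le> 2 ^ j" by (auto intro: less_imp_le)
  define j where "j = (LEAST j::nat. x \<le> 2 ^ j)"
  have j: "x \<le> 2 ^ j" unfolding j_def by (rule LeastI_ex[OF ex])
  show ?thesis
  proof (cases j)
    case 0 then show ?thesis using j assms by (intro exI[of _ 0]) auto
  next
    case (Suc i)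
    then have "\<not> x \<le> 2 ^ i" unfolding j_def using not_less_Least[of i "\<lambda>j. x \<le> 2 ^ j"] Suc j_def by auto
    then show ?thesis using j Suc by (intro exI[of _ j]) auto
  qed
qed

lemma pred_snth':
  fixes p :: "'a pmf"
  shows "{\<omega>\<in>space (stream_space (measure_pmf p)). Q (\<omega> !! i)} \<in> sets (stream_space (measure_pmf p))"
  using pred_snth[where p=p and Q=Q and i=i] unfolding pred_def .


lemma sets_returns:
  fixes p :: "'a pmf"
  shows "{\<omega>\<in>space (stream_space (measure_pmf p)). \<exists>j. (\<forall>i<j. \<not> Q1 i (\<omega> !! i)) \<and> Q2 j (\<omega> !! j)} \<in> sets (stream_space (measure_pmf p))"
proof -
  let ?S = "stream_space (measure_pmf p)"
  have A: "{\<omega>\<in>space ?S. \<forall>i\<in>{..<j}. \<not> Q1 i (\<omega> !! i)} \<in> sets ?S" for j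
  proof (rule sets.sets_Collect_finite_All)
    fix i show "{\<omega>\<in>space ?S. \<not> Q1 i (\<omega> !! i)} \<in> sets ?S"
      using pred_snth'[where p=p and Q="\<lambda>y. \<not> Q1 i y" and i=i] .
  qed simp
  have B: "{\<omega>\<in>space ?S. Q2 j (\<omega> !! j)} \<in> sets ?S" for j using pred_snth'[where p=p and Q="Q2 j" and i=j] .
  have U: "(\<Union>j. {\<omega>\<in>space ?S. \<forall>i\<in>{..<j}. \<not> Q1 i (\<omega> !! i)} \<inter> {\<omega>\<in>space ?S. Q2 j (\<omega> !! j)}) \<in> sets ?S"
    using A B by (intro sets.countable_UN sets.Int) (auto simp del: space_stream_space)
  have eq: "(\<Union>j. {\<omega>\<in>space ?S. \<forall>i\<in>{..<j}. \<not> Q1 i (\<omega> !! i)} \<inter> {\<omega>\<in>space ?S. Q2 j (\<omega> !! j)}) =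
     {\<omega>\<in>space ?S. \<exists>j. (\<forall>i<j. \<not> Q1 i (\<omega> !! i)) \<and> Q2 j (\<omega> !! j)}"
    by auto
  show ?thesis unfolding eq[symmetric] by (rule U)
qed

theorem lemma1:
  fixes c :: real
  shows "\<exists>C::real. \<forall>(P::real poly) (n::nat) (m::real) (eps::real) (lam::nat)
            (approx :: nat \<Rightarrow> real \<Rightarrow> real) (k::nat).
     degree P = n \<longrightarrow> n \<ge> 2 \<longrightarrow> eps > 0 \<longrightarrow>
     lam \<ge> 2 \<longrightarrow> real lam \<le> c * log 2 (real n) \<longrightarrow>
     (\<forall>r. \<forall>x\<in>grid m (eps / 2 ^ lam) (2 ^ lam * n).
          \<bar>approx r x - poly P x\<bar> < 2 powr (- real r)) \<longrightarrow>
     k \<ge> 1 \<longrightarrow>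
     measure (stream_space (measure_pmf (pmf_of_set (grid m (eps / 2 ^ lam) (2 ^ lam * n)))))
       {\<omega> \<in> space (stream_space (measure_pmf (pmf_of_set (grid m (eps / 2 ^ lam) (2 ^ lam * n))))).
          \<exists>j. returns_at approx \<omega> j \<and>
              \<omega> !! j \<in> grid m (eps / 2 ^ lam) (2 ^ lam * n) \<and>
              poly P (\<omega> !! j) \<noteq> 0 \<and>
              log 2 (max 1 (1 / \<bar>poly P (\<omega> !! j)\<bar>))
                \<le> 2 ^ k * (C * (real n * log 2 (real n)
                     + log 2 (max 1 (1 / Max ((\<lambda>y. \<bar>poly P y\<bar>) ` grid m eps n)))))}
       \<ge> 1 - 1 / 2 ^ (k * (lam - 1))"
proof -
  define C where "C = 64 * (6 + \<bar>c\<bar>)"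
  show ?thesis
  proof (rule exI[of _ C], intro allI impI)
    fix P :: "real poly" and n :: nat and m eps :: real and lam :: nat and approx :: "nat \<Rightarrow> real \<Rightarrow> real" and k :: nat
    assume deg: "degree P = n" and n2: "n \<ge> 2" and eps: "eps > 0" and lam2: "lam \<ge> 2"
      and lamc: "real lam \<le> c * log 2 (real n)"
      and appr: "\<forall>r. \<forall>x\<in>grid m (eps / 2 ^ lam) (2 ^ lam * n). \<bar>approx r x - poly P x\<bar> < 2 powr (- real r)"
      and k1: "k \<ge> 1"
    define G where "G = grid m (eps / 2 ^ lam) (2 ^ lam * n)"
    define Mx where "Mx = Max ((\<lambda>y. \<bar>poly P y\<bar>) ` grid m eps n)"
    define T where "T = Mx / (2 * (real (n+1) * (real (n+1) * 2 ^ lam) ^ n))"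
    define Bd where "Bd = {x \<in> G. \<bar>poly P x\<bar> \<le> T}"
    define D where "D = real n * log 2 (real n) + log 2 (max 1 (1 / Mx))"
    define A where "A = 6 + \<bar>c\<bar>"
    define p where "p = pmf_of_set G"
    define S where "S = stream_space (measure_pmf p)"
    have Mx0: "Mx > 0" unfolding Mx_def using max_pos[OF deg _ eps] n2 by auto
    have T0: "T > 0" unfolding T_def using Mx0 by simp
    have cardBd: "card Bd \<le> n" unfolding Bd_def G_def T_def Mx_def using few_bad[OF deg _ eps] n2 by auto
    have finG: "finite G" and neG: "G \<noteq> {}" unfolding G_def using grid_finite grid_ne[of m "eps / 2 ^ lam" "2 ^ lam * n"] by auto
    have del0: "eps / 2 ^ lam > 0" using eps by simp
    have cardG: "card G \<ge> 2 ^ lam * n + 1" unfolding G_def using grid_card[OF del0] by simp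
    have logb: "log 2 (5 / T) \<le> A * D" unfolding A_def D_def using log_bound[OF n2 lamc Mx0 T_def] .
    have l1: "log 2 (real n) \<ge> 1" using n2 by simp
    have D2: "D \<ge> 2"
    proof -
      have "2 * 1 \<le> real n * log 2 (real n)" using n2 l1 by (intro mult_mono) auto
      moreover have "log 2 (max 1 (1 / Mx)) \<ge> 0" by simp
      ultimately show ?thesis unfolding D_def by linarith
    qed
    have A6: "A \<ge> 6" unfolding A_def by simp
    have AD1: "A * D \<ge> 1"
    proof -
      have "1 * 1 \<le> A * D" using A6 D2 by (intro mult_mono) auto
      then show ?thesis by simp
    qed
    obtain j0 :: nat where j0: "A * D \<le> 2 ^ j0" "2 ^ j0 \<le> 2 * (A * D)"
      using pow2_between[OF AD1] by auto
    have rho_ge: "real (rho j) \<ge> A * D" if "j \<ge> j0" for j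
    proof -
      have "(2::nat) ^ j0 \<le> 2 ^ j" using that by (intro power_increasing) auto
      also have "(2::nat) ^ j \<le> 2 ^ (j + 6) - 1"
      proof -
        have "(2::nat) ^ (j + 6) = 64 * 2 ^ j" by (simp add: power_add)
        moreover have "(1::nat) \<le> 2 ^ j" by simp
        ultimately show ?thesis by linarith
      qed
      finally have "(2::nat) ^ j0 \<le> rho j" unfolding rho_def .
      then have "real (2 ^ j0) \<le> real (rho j)" by (rule of_nat_mono)
      moreover have "real ((2::nat) ^ j0) = (2::real) ^ j0" by simp
      ultimately show ?thesis using j0 by linarith
    qed
    have small: "2 powr (- real (rho j)) \<le> T / 5" if "j \<ge> j0" for j
    proof -
      have "log 2 (5 / T) \<le> real (rho j)" using logb rho_ge[OF that] by linarith
      then have "5 / T \<le> 2 powr real (rho j)" using T0 by (subst (asm) log_le_iff) auto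
      then have "1 / 2 powr real (rho j) \<le> 1 / (5 / T)" using T0 by (intro divide_left_mono) auto
      then show ?thesis by (simp add: powr_minus_divide)
    qed
    have four: "2 powr (- real r + 2) = 4 * 2 powr (- real r)" for r :: nat
    proof -
      have "2 powr (- real r + 2) = 2 powr (- real r) * 2 powr (2::real)" by (rule powr_add)
      moreover have "(2::real) powr (2::real) = 4" using powr_realpow[of 2 2] by simp
      ultimately show ?thesis by simp
    qed
    have acc_good: "accept approx j x" if "x \<in> G" "\<bar>poly P x\<bar> > T" "j \<ge> j0" for j x
    proof -
      have "\<bar>approx (rho j) x - poly P x\<bar> < 2 powr (- real (rho j))" using appr that(1) unfolding G_def by blast
      moreover have "2 powr (- real (rho j)) \<le> T / 5" by (rule small[OF that(3)])
      ultimately have "\<bar>approx (rho j) x\<bar> > 4 * 2 powr (- real (rho j))" using that(2) by arith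
      then show ?thesis unfolding accept_def four .
    qed
    have acc_info: "poly P x \<noteq> 0 \<and> log 2 (max 1 (1 / \<bar>poly P x\<bar>)) \<le> real (rho j)"
      if "x \<in> G" "accept approx j x" for j x
    proof -
      define e where "e = 2 powr (- real (rho j))"
      have e0: "e > 0" unfolding e_def by simp
      have "\<bar>approx (rho j) x - poly P x\<bar> < e" using appr that(1) unfolding G_def e_def by blast
      moreover have "\<bar>approx (rho j) x\<bar> > 4 * e" using that(2) unfolding accept_def four e_def .
      ultimately have Pe: "\<bar>poly P x\<bar> > e" by arith
      then have Pnz: "poly P x \<noteq> 0" using e0 by auto
      have "1 / \<bar>poly P x\<bar> \<le> 1 / e" using Pe e0 by (intro divide_left_mono) auto
      also have "1 / e = 2 powr real (rho j)" unfolding e_def by (simp add: powr_minus_divide)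
      finally have "max 1 (1 / \<bar>poly P x\<bar>) \<le> 2 powr real (rho j)"
        using ge_one_powr_ge_zero[of 2 "real (rho j)"] by simp
      then have "log 2 (max 1 (1 / \<bar>poly P x\<bar>)) \<le> real (rho j)"
        by (subst log_le_iff) auto
      then show ?thesis using Pnz by simp
    qed
    have rho_le: "real (rho j) \<le> 2 ^ k * (C * D)" if "j < j0 + k" for j
    proof -
      have "real (rho j) \<le> real ((2::nat) ^ (j + 6))" unfolding rho_def by (intro of_nat_mono) simp
      also have "\<dots> = (2::real) ^ (j + 6)" by simp
      also have "\<dots> \<le> 2 ^ (j0 + k + 5)" using that by (intro power_increasing) auto
      also have "\<dots> = 2 ^ k * (32 * 2 ^ j0)" by (simp add: power_add)
      also have "\<dots> \<le> 2 ^ k * (32 * (2 * (A * D)))" using j0(2) by (intro mult_left_mono) auto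
      also have "\<dots> = 2 ^ k * (C * D)" unfolding C_def A_def by simp
      finally show ?thesis .
    qed
    define E where "E = {\<omega> \<in> space S. \<exists>j. returns_at approx \<omega> j \<and> \<omega> !! j \<in> G \<and> poly P (\<omega> !! j) \<noteq> 0 \<and> log 2 (max 1 (1 / \<bar>poly P (\<omega> !! j)\<bar>)) \<le> 2 ^ k * (C * D)}"
    have PS: "prob_space S" unfolding S_def by (rule prob_space.prob_space_stream_space[OF prob_space_measure_pmf])
    interpret SP: prob_space S by (rule PS)
    have Eeq: "E = {\<omega>\<in>space S. \<exists>j. (\<forall>i<j. \<not> accept approx i (\<omega> !! i)) \<and> (\<lambda>j x. accept approx j x \<and> x \<in> G \<and> poly P x \<noteq> 0 \<and> log 2 (max 1 (1 / \<bar>poly P x\<bar>)) \<le> 2 ^ k * (C * D)) j (\<omega> !! j)}"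
      unfolding E_def returns_at_def by auto
    have Esets: "E \<in> sets S" unfolding Eeq S_def by (rule sets_returns)
    define Q where "Q = {\<omega>. \<forall>i<k. \<omega> !! (j0 + i) \<in> Bd}"
    have Qsets: "Q \<in> sets S" unfolding Q_def S_def by (rule sets_snth_all)
    have AEG: "AE \<omega> in S. \<forall>i. \<omega> !! i \<in> G"
    proof -
      have "AE \<omega> in S. stream_all (\<lambda>x. x \<in> G) \<omega>" unfolding S_def
        by (rule prob_space.AE_stream_all[OF prob_space_measure_pmf]) (auto simp: p_def AE_measure_pmf_iff finG neG pred_def)
      then show ?thesis unfolding stream_all_def .
    qed
    have incl: "AE \<omega> in S. \<omega> \<in> space S - E \<longrightarrow> \<omega> \<in> Q"
      using AEG
    proof (rule eventually_mono)
      fix \<omega> assume allG: "\<forall>i. \<omega> !! i \<in> G"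
      show "\<omega> \<in> space S - E \<longrightarrow> \<omega> \<in> Q"
      proof (rule impI, rule ccontr)
        assume nE: "\<omega> \<in> space S - E" and nQ: "\<omega> \<notin> Q"
        then obtain i where i: "i < k" "\<omega> !! (j0 + i) \<notin> Bd" unfolding Q_def by auto
        then have "\<bar>poly P (\<omega> !! (j0 + i))\<bar> > T" using allG unfolding Bd_def by auto
        then have acc1: "accept approx (j0 + i) (\<omega> !! (j0 + i))" using allG by (intro acc_good) auto
        then have "\<exists>j. accept approx j (\<omega> !! j)" by blast
        then obtain j where j: "accept approx j (\<omega> !! j)" "\<forall>i'<j. \<not> accept approx i' (\<omega> !! i')"
          using exists_least_iff[of "\<lambda>j. accept approx j (\<omega> !! j)"] by blast
        have "j \<le> j0 + i" using j(2) acc1 by (meson not_le)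
        then have jlt: "j < j0 + k" using i by simp
        have info: "poly P (\<omega> !! j) \<noteq> 0 \<and> log 2 (max 1 (1 / \<bar>poly P (\<omega> !! j)\<bar>)) \<le> real (rho j)"
          using acc_info allG j(1) by blast
        have "\<omega> \<in> E" unfolding E_def using nE info rho_le[OF jlt] j allG
          by (auto simp: returns_at_def)
        then show False using nE by simp
      qed
    qed
    have m1: "measure S (space S - E) \<le> measure S Q" by (rule SP.finite_measure_mono_AE[OF incl Qsets])
    define x where "x = real (card Bd) / real (card G)"
    have x0: "x \<ge> 0" unfolding x_def by simp
    have mQ: "measure S Q = x ^ k"
    proof -
      have GB: "G \<inter> Bd = Bd" unfolding Bd_def by auto
      have "emeasure S Q = emeasure (measure_pmf p) Bd ^ k" unfolding S_def Q_def by (rule prod_set)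
      also have "emeasure (measure_pmf p) Bd = ennreal (measure (measure_pmf p) Bd)"
        by (rule measure_pmf.emeasure_eq_measure)
      also have "measure (measure_pmf p) Bd = x"
        unfolding p_def x_def using measure_pmf_of_set[OF neG finG, of Bd] GB by simp
      also have "ennreal x ^ k = ennreal (x ^ k)" using x0 by (rule ennreal_power)
      finally have "ennreal (measure S Q) = ennreal (x ^ k)" using SP.emeasure_eq_measure by simp
      then show ?thesis using x0 by (simp add: ennreal_inj)
    qed
    have xb: "x \<le> 1 / 2 ^ (lam - 1)"
    proof -
      have pw: "(2::nat) ^ lam = 2 * 2 ^ (lam - 1)" using lam2 by (cases lam) auto
      have "card Bd * 2 ^ (lam - 1) \<le> n * 2 ^ (lam - 1)" using cardBd by (rule mult_right_mono) simp
      also have "\<dots> \<le> 2 * 2 ^ (lam - 1) * n" by simp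
      also have "\<dots> \<le> card G" using cardG pw by simp
      finally have "real (card Bd * 2 ^ (lam - 1)) \<le> real (card G)" by (rule of_nat_mono)
      then have h: "real (card Bd) * 2 ^ (lam - 1) \<le> real (card G)" by simp
      have cg: "real (card G) > 0" using finG neG by (simp add: card_gt_0_iff)
      show ?thesis unfolding x_def using cg h by (simp add: pos_divide_le_eq field_simps)
    qed
    have "x ^ k \<le> (1 / 2 ^ (lam - 1)) ^ k" by (rule power_mono[OF xb x0])
    also have "(1 / (2::real) ^ (lam - 1)) ^ k = 1 / 2 ^ (k * (lam - 1))"
      by (simp add: power_one_over power_mult[symmetric] mult.commute)
    finally have xk: "x ^ k \<le> 1 / 2 ^ (k * (lam - 1))" .
    have "measure S E = 1 - measure S (space S - E)" using SP.prob_compl[OF Esets] by simp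
    then have main: "measure S E \<ge> 1 - 1 / 2 ^ (k * (lam - 1))" using m1 mQ xk by linarith
    show "measure (stream_space (measure_pmf (pmf_of_set (grid m (eps / 2 ^ lam) (2 ^ lam * n)))))
       {\<omega> \<in> space (stream_space (measure_pmf (pmf_of_set (grid m (eps / 2 ^ lam) (2 ^ lam * n))))).
          \<exists>j. returns_at approx \<omega> j \<and>
              \<omega> !! j \<in> grid m (eps / 2 ^ lam) (2 ^ lam * n) \<and>
              poly P (\<omega> !! j) \<noteq> 0 \<and>
              log 2 (max 1 (1 / \<bar>poly P (\<omega> !! j)\<bar>))
                \<le> 2 ^ k * (C * (real n * log 2 (real n)
                     + log 2 (max 1 (1 / Max ((\<lambda>y. \<bar>poly P y\<bar>) ` grid m eps n)))))}
       \<ge> 1 - 1 / 2 ^ (k * (lam - 1))"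
      using main unfolding E_def S_def p_def G_def D_def Mx_def .
  qed
qed

end
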